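(* Let $p\ge 1$, $n_0,n_1\ge 1$, let $\bm{X}_0$ ($n_0\times p$) and $\bm{X}_1$ ($n_1\times p$) be fixed design matrices of full column rank, let $\sigma_0,\sigma_1>0$ be known, and let $0<a_0\le 1$. Suppose the historical responses satisfy $\bm{Y}_0\sim N_{n_0}(\bm{X}_0\bm{\beta}_0,\sigma_0^2\bm{I}_{n_0})$ and the current responses satisfy $\bm{Y}_1\sim N_{n_1}(\bm{X}_1\bm{\beta}_1,\sigma_1^2\bm{I}_{n_1})$, independently, where the parameters satisfy the scale-transformation relation $\bm{\beta}_0=(\sigma_0/\sigma_1)\bm{\beta}_1$. Define the straPP posterior mean and power-prior posterior mean $$\widehat{\bm{\beta}}_s=\bm{\Sigma}_s\Big\{\tfrac{1}{\sigma_1^2}\bm{X}_1^T\bm{Y}_1+\tfrac{a_0}{\sigma_0\sigma_1}\bm{X}_0^T\bm{Y}_0\Big\},\quad \bm{\Sigma}_s=\sigma_1^2(\bm{X}_1^T\bm{X}_1+a_0\bm{X}_0^T\bm{X}_0)^{-1},$$ $$\widehat{\bm{\beta}}_p=\bm{\Sigma}_p\Big\{\tfrac{1}{\sigma_1^2}\bm{X}_1^T\bm{Y}_1+\tfrac{a_0}{\sigma_0^2}\bm{X}_0^T\bm{Y}_0\Big\},\quad \bm{\Sigma}_p=\Big\{\tfrac{1}{\sigma_1^2}\bm{X}_1^T\bm{X}_1+\tfrac{a_0}{\sigma_0^2}\bm{X}_0^T\bm{X}_0\Big\}^{-1}.$$ For $j\in\{0,\dots,p-1\}$ let $\beta_{1j}$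 be the $(j+1)$th entry of $\bm{\beta}_1$ and $\hat\beta_{s,1j},\hat\beta_{p,1j}$ the $(j+1)$th entries of $\widehat{\bm{\beta}}_s,\widehat{\bm{\beta}}_p$. Assume $\beta_{1j}\neq 0$ and $\mathrm{Bias}(\hat\beta_{p,1j})\neq 0$. Then $$\frac{\mathrm{Var}(\hat\beta_{s,1j})-\mathrm{Var}(\hat\beta_{p,1j})}{\big[\mathrm{PercentBias}(\hat\beta_{p,1j})\big]^2}\le \beta_{1j}^2$$ implies $\mathrm{MSE}(\hat\beta_{s,1j})\le \mathrm{MSE}(\hat\beta_{p,1j})$.
   Context: All variances, biases and MSEs are frequentist, taken over the sampling distribution of $(\bm{Y}_0,\bm{Y}_1)$ with designs fixed: $\mathrm{Bias}(\hat\beta)=E(\hat\beta)-\beta_{1j}$, $\mathrm{MSE}=\mathrm{Var}+\mathrm{Bias}^2$, and $\mathrm{PercentBias}(\hat\beta_{p,1j})=\mathrm{Bias}(\hat\beta_{p,1j})/\beta_{1j}$. The two estimators are the posterior means of $\bm{\beta}_1$ under a uniform improper initial prior combined with, respectively, the scale transformed power prior $\bm{\beta}_1\sim N\big((\sigma_1/\sigma_0)(\bm{X}_0^T\bm{X}_0)^{-1}\bm{X}_0^T\bm{Y}_0,\ (\sigma_1^2/a_0)(\bm{X}_0^T\bm{X}_0)^{-1}\big)$ and the power prior $\bm{\beta}_1\sim N\big((\bm{X}_0^T\bm{X}_0)^{-1}\bm{X}_0^T\bm{Y}_0,\ (\sigma_0^2/a_0)(\bm{X}_0^T\bm{X}_0)^{-1}\big)$,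 with current-data likelihood $N(\bm{X}_1\bm{\beta}_1,\sigma_1^2\bm{I})$. *)

theory Defs
  imports "HOL-Analysis.Analysis" "HOL-Probability.Probability"
begin

definition bias :: "'a measure \<Rightarrow> ('a \<Rightarrow> real) \<Rightarrow> real \<Rightarrow> real" where
  "bias M T b = prob_space.expectation M T - b"

definition mse :: "'a measure \<Rightarrow> ('a \<Rightarrow> real) \<Rightarrow> real \<Rightarrow> real" where
  "mse M T b = prob_space.variance M T + (bias M T b)\<^sup>2"

definition percent_bias :: "'a measure \<Rightarrow> ('a \<Rightarrow> real) \<Rightarrow> real \<Rightarrow> real" where
  "percent_bias M T b = bias M T b / b"

definition Sigma_s :: "real^'p^'n1 \<Rightarrow> real^'p^'n0 \<Rightarrow> real \<Rightarrow> real \<Rightarrow> real^'p^'p" where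
  "Sigma_s X1 X0 s1 a0 =
     s1\<^sup>2 *\<^sub>R matrix_inv (transpose X1 ** X1 + a0 *\<^sub>R (transpose X0 ** X0))"

definition beta_s_hat ::
  "real^'p^'n1 \<Rightarrow> real^'p^'n0 \<Rightarrow> real \<Rightarrow> real \<Rightarrow> real \<Rightarrow> real^'n1 \<Rightarrow> real^'n0 \<Rightarrow> real^'p" where
  "beta_s_hat X1 X0 s1 s0 a0 y1 y0 =
     Sigma_s X1 X0 s1 a0 *v
       ((1 / s1\<^sup>2) *\<^sub>R (transpose X1 *v y1) + (a0 / (s0 * s1)) *\<^sub>R (transpose X0 *v y0))"

definition Sigma_p :: "real^'p^'n1 \<Rightarrow> real^'p^'n0 \<Rightarrow> real \<Rightarrow> real \<Rightarrow> real \<Rightarrow> real^'p^'p" where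
  "Sigma_p X1 X0 s1 s0 a0 =
     matrix_inv ((1 / s1\<^sup>2) *\<^sub>R (transpose X1 ** X1) + (a0 / s0\<^sup>2) *\<^sub>R (transpose X0 ** X0))"

definition beta_p_hat ::
  "real^'p^'n1 \<Rightarrow> real^'p^'n0 \<Rightarrow> real \<Rightarrow> real \<Rightarrow> real \<Rightarrow> real^'n1 \<Rightarrow> real^'n0 \<Rightarrow> real^'p" where
  "beta_p_hat X1 X0 s1 s0 a0 y1 y0 =
     Sigma_p X1 X0 s1 s0 a0 *v
       ((1 / s1\<^sup>2) *\<^sub>R (transpose X1 *v y1) + (a0 / s0\<^sup>2) *\<^sub>R (transpose X0 *v y0))"

end

theory Submission
  imports Defs
begin

lemma scaleR_mv: "((k::real) *\<^sub>R (A::real^'n^'m)) *v x = k *\<^sub>R (A *v x)"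
  by (simp add: vec_eq_iff matrix_vector_mult_def sum_distrib_left mult.assoc)

lemma dot_tr: "(x::real^'n) \<bullet> (transpose (X::real^'n^'m) *v y) = (X *v x) \<bullet> y"
  by (metis transpose_matrix_vector dot_lmul_matrix inner_commute)

lemma dot_tr2: "(x::real^'n) \<bullet> (y v* (X::real^'n^'m)) = (X *v x) \<bullet> y"
  by (metis dot_lmul_matrix inner_commute)

lemma inv_ok:
  fixes X0 :: "real^'p^'n0" and X1 :: "real^'p^'n1"
  assumes rank1: "rank X1 = CARD('p)" and a0: "0 < a0"
  shows "matrix_inv (transpose X1 ** X1 + a0 *\<^sub>R (transpose X0 ** X0)) ** (transpose X1 ** X1 + a0 *\<^sub>R (transpose X0 ** X0)) = mat 1"
proof -
  define A where "A = transpose X1 ** X1 + a0 *\<^sub>R (transpose X0 ** X0)"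
  have key: "x \<bullet> (A *v x) = (X1 *v x) \<bullet> (X1 *v x) + a0 * ((X0 *v x) \<bullet> (X0 *v x))" for x
    unfolding A_def
    by (simp add: matrix_vector_mult_add_rdistrib scaleR_mv inner_add_right dot_tr2 matrix_vector_mul_assoc[symmetric])
  have "inj ((*v) A)"
  proof (rule injI)
    fix x y assume "A *v x = A *v y"
    hence z: "A *v (x - y) = 0" by (simp add: matrix_vector_mult_diff_distrib)
    have "(X1 *v (x-y)) \<bullet> (X1 *v (x-y)) + a0 * ((X0 *v (x-y)) \<bullet> (X0 *v (x-y))) = 0"
      using key[of "x-y"] z by simp
    moreover have "0 \<le> (X0 *v (x-y)) \<bullet> (X0 *v (x-y))" by simp
    moreover have "0 \<le> (X1 *v (x-y)) \<bullet> (X1 *v (x-y))" by simp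
    ultimately have "(X1 *v (x-y)) \<bullet> (X1 *v (x-y)) = 0" using a0
      by (smt (verit) mult_nonneg_nonneg)
    hence "X1 *v (x-y) = 0" by simp
    hence "X1 *v x = X1 *v y" by (simp add: matrix_vector_mult_diff_distrib)
    thus "x = y" using rank1 full_rank_injective by (metis injD)
  qed
  hence "invertible A" using matrix_left_invertible_injective invertible_left_inverse by blast
  hence "A ** matrix_inv A = mat 1 \<and> matrix_inv A ** A = mat 1"
    unfolding invertible_def matrix_inv_def by (rule someI_ex)
  thus ?thesis unfolding A_def by blast
qed

lemma (in prob_space) lin_exp:
  fixes Y :: "'a \<Rightarrow> real^'n" and B :: "real^'n^'m"
  assumes "\<And>k. integrable M (\<lambda>\<omega>. Y \<omega> $ k)"
  shows "integrable M (\<lambda>\<omega>. (B *v Y \<omega>) $ j)"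
    and "expectation (\<lambda>\<omega>. (B *v Y \<omega>) $ j) = (B *v (\<chi> k. expectation (\<lambda>\<omega>. Y \<omega> $ k))) $ j"
  using assms by (simp_all add: matrix_vector_mult_def)

theorem theorem1:
  fixes M :: "'a measure"
    and X0 :: "real^'p^'n0" and X1 :: "real^'p^'n1"
    and Y0 :: "'a \<Rightarrow> real^'n0" and Y1 :: "'a \<Rightarrow> real^'n1"
    and beta0 beta1 :: "real^'p"
    and s0 s1 a0 :: real
    and j :: 'p
  assumes M: "prob_space M"
    and rank0: "rank X0 = CARD('p)" and rank1: "rank X1 = CARD('p)"
    and s0: "s0 > 0" and s1: "s1 > 0"
    and a0: "0 < a0" "a0 \<le> 1"
    and Y0_dist: "\<And>k. distributed M lborel (\<lambda>\<omega>. Y0 \<omega> $ k) (normal_density ((X0 *v beta0) $ k) s0)"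
    and Y1_dist: "\<And>k. distributed M lborel (\<lambda>\<omega>. Y1 \<omega> $ k) (normal_density ((X1 *v beta1) $ k) s1)"
    and indep: "prob_space.indep_vars M (\<lambda>_. borel)
                  (\<lambda>i \<omega>. case i of Inl k \<Rightarrow> Y0 \<omega> $ k | Inr k \<Rightarrow> Y1 \<omega> $ k) UNIV"
    and scale: "beta0 = (s0 / s1) *\<^sub>R beta1"
    and nz: "beta1 $ j \<noteq> 0"
    and bias_nz: "bias M (\<lambda>\<omega>. beta_p_hat X1 X0 s1 s0 a0 (Y1 \<omega>) (Y0 \<omega>) $ j) (beta1 $ j) \<noteq> 0"
    and cond:
      "(prob_space.variance M (\<lambda>\<omega>. beta_s_hat X1 X0 s1 s0 a0 (Y1 \<omega>) (Y0 \<omega>) $ j)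
        - prob_space.variance M (\<lambda>\<omega>. beta_p_hat X1 X0 s1 s0 a0 (Y1 \<omega>) (Y0 \<omega>) $ j))
       / (percent_bias M (\<lambda>\<omega>. beta_p_hat X1 X0 s1 s0 a0 (Y1 \<omega>) (Y0 \<omega>) $ j) (beta1 $ j))\<^sup>2
       \<le> (beta1 $ j)\<^sup>2"
  shows "mse M (\<lambda>\<omega>. beta_s_hat X1 X0 s1 s0 a0 (Y1 \<omega>) (Y0 \<omega>) $ j) (beta1 $ j)
         \<le> mse M (\<lambda>\<omega>. beta_p_hat X1 X0 s1 s0 a0 (Y1 \<omega>) (Y0 \<omega>) $ j) (beta1 $ j)"
proof -
  interpret prob_space M by (rule M)
  have int0: "integrable M (\<lambda>\<omega>. Y0 \<omega> $ k)" for k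
    by (rule distributed_integrable_var[OF Y0_dist]) (auto simp: normal_density_nonneg intro: integrable_normal_moment_nz_1 s0 s1)
  have int1: "integrable M (\<lambda>\<omega>. Y1 \<omega> $ k)" for k
    by (rule distributed_integrable_var[OF Y1_dist]) (auto simp: normal_density_nonneg intro: integrable_normal_moment_nz_1 s0 s1)
  have E0: "(\<chi> k. expectation (\<lambda>\<omega>. Y0 \<omega> $ k)) = X0 *v beta0"
    using normal_distributed_expectation[OF s0 Y0_dist] by (simp add: vec_eq_iff)
  have E1: "(\<chi> k. expectation (\<lambda>\<omega>. Y1 \<omega> $ k)) = X1 *v beta1"
    using normal_distributed_expectation[OF s1 Y1_dist] by (simp add: vec_eq_iff)
  define A where "A = transpose X1 ** X1 + a0 *\<^sub>R (transpose X0 ** X0)"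
  define S where "S = Sigma_s X1 X0 s1 a0"
  define B1 where "B1 = (1/s1\<^sup>2) *\<^sub>R (S ** transpose X1)"
  define B0 where "B0 = (a0/(s0 * s1)) *\<^sub>R (S ** transpose X0)"
  have decomp: "beta_s_hat X1 X0 s1 s0 a0 y1 y0 = B1 *v y1 + B0 *v y0" for y1 y0
    unfolding beta_s_hat_def B1_def B0_def S_def
    by (simp add: matrix_vector_right_distrib matrix_vector_mult_scaleR scaleR_mv matrix_vector_mul_assoc del: transpose_matrix_vector)
  have inv: "matrix_inv A ** A = mat 1" unfolding A_def by (rule inv_ok[OF rank1 a0(1)])
  have vec: "S *v ((1/s1\<^sup>2) *\<^sub>R (transpose X1 *v (X1 *v beta1)) + (a0/(s0 * s1)) *\<^sub>R (transpose X0 *v (X0 *v beta0))) = beta1"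
  proof -
    have "(1/s1\<^sup>2) *\<^sub>R (transpose X1 *v (X1 *v beta1)) + (a0/(s0 * s1)) *\<^sub>R (transpose X0 *v (X0 *v beta0))
          = (1/s1\<^sup>2) *\<^sub>R (A *v beta1)"
      using s0 s1 unfolding A_def scale
      by (simp add: matrix_vector_mult_add_rdistrib scaleR_mv matrix_vector_mult_scaleR matrix_vector_mul_assoc scaleR_right_distrib power2_eq_square del: transpose_matrix_vector)
    moreover have "S *v ((1/s1\<^sup>2) *\<^sub>R (A *v beta1)) = beta1"
    proof -
      have "S *v ((1/s1\<^sup>2) *\<^sub>R (A *v beta1)) = s1\<^sup>2 *\<^sub>R (matrix_inv A *v ((1/s1\<^sup>2) *\<^sub>R (A *v beta1)))"
        unfolding S_def Sigma_s_def A_def[symmetric] by (rule scaleR_mv)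
      also have "\<dots> = (matrix_inv A ** A) *v beta1"
        using s1 by (simp add: matrix_vector_mult_scaleR matrix_vector_mul_assoc del: transpose_matrix_vector)
      finally show ?thesis using inv by simp
    qed
    ultimately show ?thesis by simp
  qed
  have Es: "expectation (\<lambda>\<omega>. beta_s_hat X1 X0 s1 s0 a0 (Y1 \<omega>) (Y0 \<omega>) $ j) = beta1 $ j"
  proof -
    have "expectation (\<lambda>\<omega>. beta_s_hat X1 X0 s1 s0 a0 (Y1 \<omega>) (Y0 \<omega>) $ j)
        = expectation (\<lambda>\<omega>. (B1 *v Y1 \<omega>) $ j + (B0 *v Y0 \<omega>) $ j)"
      by (simp add: decomp)
    also have "\<dots> = expectation (\<lambda>\<omega>. (B1 *v Y1 \<omega>) $ j) + expectation (\<lambda>\<omega>. (B0 *v Y0 \<omega>) $ j)"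
      by (rule Bochner_Integration.integral_add; rule lin_exp(1); simp add: int0 int1)
    also have "\<dots> = (B1 *v (X1 *v beta1)) $ j + (B0 *v (X0 *v beta0)) $ j"
      using lin_exp(2)[where Y=Y1 and B=B1 and j=j, OF int1, unfolded E1]
            lin_exp(2)[where Y=Y0 and B=B0 and j=j, OF int0, unfolded E0] by (simp only:)
    also have "\<dots> = beta1 $ j"
    proof -
      have b1: "B1 *v v = (1/s1\<^sup>2) *\<^sub>R (S *v (transpose X1 *v v))" for v
        unfolding B1_def by (simp only: scaleR_mv matrix_vector_mul_assoc)
      have b0: "B0 *v v = (a0/(s0 * s1)) *\<^sub>R (S *v (transpose X0 *v v))" for v
        unfolding B0_def by (simp only: scaleR_mv matrix_vector_mul_assoc)
      show ?thesis using vec unfolding b1 b0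
        by (simp only: matrix_vector_right_distrib matrix_vector_mult_scaleR) (metis vector_add_component)
    qed
    finally show ?thesis .
  qed
  define Vs where "Vs = variance (\<lambda>\<omega>. beta_s_hat X1 X0 s1 s0 a0 (Y1 \<omega>) (Y0 \<omega>) $ j)"
  define Vp where "Vp = variance (\<lambda>\<omega>. beta_p_hat X1 X0 s1 s0 a0 (Y1 \<omega>) (Y0 \<omega>) $ j)"
  define Bp where "Bp = bias M (\<lambda>\<omega>. beta_p_hat X1 X0 s1 s0 a0 (Y1 \<omega>) (Y0 \<omega>) $ j) (beta1 $ j)"
  define b where "b = beta1 $ j"
  have c: "(Vs - Vp) / (Bp / b)\<^sup>2 \<le> b\<^sup>2"
    using cond unfolding Vs_def Vp_def Bp_def b_def percent_bias_def .
  have bnz: "b \<noteq> 0" and Bnz: "Bp \<noteq> 0" using nz bias_nz unfolding b_def Bp_def by auto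
  have "(Bp / b)\<^sup>2 > 0" using bnz Bnz by simp
  hence "Vs - Vp \<le> b\<^sup>2 * (Bp / b)\<^sup>2" using c by (simp add: pos_divide_le_eq)
  also have "\<dots> = Bp\<^sup>2" using bnz by (simp add: power_divide)
  finally have "Vs \<le> Vp + Bp\<^sup>2" by simp
  moreover have "mse M (\<lambda>\<omega>. beta_s_hat X1 X0 s1 s0 a0 (Y1 \<omega>) (Y0 \<omega>) $ j) (beta1 $ j) = Vs"
    unfolding mse_def bias_def Es Vs_def by simp
  moreover have "mse M (\<lambda>\<omega>. beta_p_hat X1 X0 s1 s0 a0 (Y1 \<omega>) (Y0 \<omega>) $ j) (beta1 $ j) = Vp + Bp\<^sup>2"
    unfolding mse_def Vp_def Bp_def by simp
  ultimately show ?thesis by linarith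
qed

end
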